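(* Let $A\in\mathbb{R}^{m\times n}$ have no zero row, with rows $a_1^T,\dots,a_m^T$, let $b\in\mathbb{R}^m$ with $Ax=b$ consistent, and let $x^\dagger$ be the minimum-norm least-squares solution. Let $0<\mu_i<2$ for $1\le i\le m$, ${\bf u}=(\mu_1,\dots,\mu_m)$, $\Lambda=\mathrm{diag}(\mu_1,\dots,\mu_m)$, $M=\mathrm{diag}(1/\|a_1\|_2^2,\dots,1/\|a_m\|_2^2)$, $P_k(\mu_k)=I-\mu_ka_ka_k^T/\|a_k\|_2^2$, $Q({\bf u})=P_m(\mu_m)\cdots P_1(\mu_1)$, and let $C({\bf u})\in\mathbb{R}^{m\times m}$ be a unit upper triangular matrix with $A_{\mathcal S}({\bf u})=C({\bf u})A$, where $A_{\mathcal S}({\bf u})=(Q_1({\bf u}_1)a_1,\dots,Q_m({\bf u}_m)a_m)^T$, $Q_j({\bf u}_j)=P_m(\mu_m)\cdots P_{j+1}(\mu_{j+1})$ for $j<m$, $Q_m({\bf u}_m)=I$. Let $y_0\in\mathbb{R}^n$, $y_k=y_{k-1}+A^T[C({\bf u})]^T\Lambda M(b-Ay_{k-1})$ for $k\ge1$, and $\bar e_k=y_k-x^\dagger-P_{N(A)}y_0$. Let $\sigma_i({\bf u})$ denote the singular values of $Q({\bf u})$. Then for all $k\ge1$, $$\|\bar e_k\|_2\le\max_{0<\sigma_i({\bf u})<1}\sigma_i({\bf u})\,\|\bar e_{k-1}\|_2\quad\text{and}\quad \|\bar e_k\|_2\le\max_{0<\sigma_i({\bf u})<1}[\sigma_i({\bf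 u})]^k\,\|\bar e_0\|_2.$$
   Context: $P_{N(A)}$ is the orthogonal projection onto the null space of $A$; the maxima are over those singular values of $Q({\bf u})$ lying strictly between $0$ and $1$. *)

theory Defs
  imports "Jordan_Normal_Form.Char_Poly"
begin

definition vnorm2 :: "real vec \<Rightarrow> real" where
  "vnorm2 v = sqrt (v \<bullet> v)"

definition outer :: "real vec \<Rightarrow> real mat" where
  "outer a = mat (dim_vec a) (dim_vec a) (\<lambda>(i,j). a $ i * a $ j)"

(* P_k(mu_k) = I - mu_k a_k a_k^T / ||a_k||^2  (rows indexed 0..m-1) *)
definition Pmat :: "real mat \<Rightarrow> (nat \<Rightarrow> real) \<Rightarrow> nat \<Rightarrow> real mat" where
  "Pmat A u k = 1\<^sub>m (dim_col A) -
     (u k / (vnorm2 (row A k))\<^sup>2) \<cdot>\<^sub>m outer (row A k)"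

(* Qfrom A u j = P_{m-1} * ... * P_j  (identity if j >= m) *)
definition Qfrom :: "real mat \<Rightarrow> (nat \<Rightarrow> real) \<Rightarrow> nat \<Rightarrow> real mat" where
  "Qfrom A u j = foldr (\<lambda>k M. M * Pmat A u k) [j..<dim_row A] (1\<^sub>m (dim_col A))"

definition Qmat :: "real mat \<Rightarrow> (nat \<Rightarrow> real) \<Rightarrow> real mat" where
  "Qmat A u = Qfrom A u 0"

definition A_S :: "real mat \<Rightarrow> (nat \<Rightarrow> real) \<Rightarrow> real mat" where
  "A_S A u = mat (dim_row A) (dim_col A) (\<lambda>(i,j). (Qfrom A u (Suc i) *\<^sub>v row A i) $ j)"

definition Lambda_mat :: "nat \<Rightarrow> (nat \<Rightarrow> real) \<Rightarrow> real mat" where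
  "Lambda_mat m u = mat m m (\<lambda>(i,j). if i = j then u i else 0)"

definition M_mat :: "real mat \<Rightarrow> real mat" where
  "M_mat A = mat (dim_row A) (dim_row A)
     (\<lambda>(i,j). if i = j then 1 / (vnorm2 (row A i))\<^sup>2 else 0)"

definition singular_value :: "real mat \<Rightarrow> real \<Rightarrow> bool" where
  "singular_value Q s \<longleftrightarrow> s \<ge> 0 \<and> eigenvalue (transpose_mat Q * Q) (s\<^sup>2)"

(* max of the singular values lying strictly in (0,1); 0 if there are none *)
definition max_sv01 :: "real mat \<Rightarrow> real" where
  "max_sv01 Q = Max (insert 0 {s. singular_value Q s \<and> 0 < s \<and> s < 1})"

definition lsq_solution :: "real mat \<Rightarrow> real vec \<Rightarrow> real vec \<Rightarrow> bool" where
  "lsq_solution A b x \<longleftrightarrow> x \<in> carrier_vec (dim_col A) \<and>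
     (\<forall>z \<in> carrier_vec (dim_col A). vnorm2 (A *\<^sub>v x - b) \<le> vnorm2 (A *\<^sub>v z - b))"

definition min_norm_lsq :: "real mat \<Rightarrow> real vec \<Rightarrow> real vec \<Rightarrow> bool" where
  "min_norm_lsq A b x \<longleftrightarrow> lsq_solution A b x \<and>
     (\<forall>z. lsq_solution A b z \<longrightarrow> vnorm2 x \<le> vnorm2 z)"

definition proj_null :: "real mat \<Rightarrow> real vec \<Rightarrow> real vec" where
  "proj_null A y = (THE p. p \<in> carrier_vec (dim_col A) \<and> A *\<^sub>v p = 0\<^sub>v (dim_row A) \<and>
      (\<forall>z \<in> carrier_vec (dim_col A). A *\<^sub>v z = 0\<^sub>v (dim_row A) \<longrightarrow> (y - p) \<bullet> z = 0))"

end

theory Submission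
  imports Defs "HOL-Analysis.Function_Topology"
begin

abbreviation "PT n \<equiv> product_topology (\<lambda>_. euclideanreal) {..<(n::nat)}"

lemma compact_argmax:
  fixes F :: "(nat \<Rightarrow> real) \<Rightarrow> real" and K :: "(nat \<Rightarrow> real) set"
  assumes cont: "continuous_map (PT n) euclideanreal F"
    and cl: "closedin (PT n) K"
    and sub: "K \<subseteq> PiE {..<n} (\<lambda>_. {-R..R})" and ne: "K \<noteq> {}"
  shows "\<exists>x\<in>K. \<forall>y\<in>K. F y \<le> F x"
proof -
  have "compactin (PT n) (PiE {..<n} (\<lambda>_. {-R..R}))"
    by (simp add: compactin_PiE)
  then have "compactin (PT n) K" using closed_compactin sub cl by blast
  then have "compactin euclideanreal (F ` K)" using image_compactin cont by blast
  then have "compact (F ` K)" by simp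
  from compact_attains_sup[OF this] ne show ?thesis by auto
qed

lemma cont_lin:
  "continuous_map (PT n) euclideanreal (\<lambda>g. \<Sum>i<n. c i * g i)"
  by (intro continuous_map_sum continuous_map_real_mult continuous_map_const[THEN iffD2]
       continuous_map_product_projection) auto

lemma cont_quad:
  "continuous_map (PT n) euclideanreal (\<lambda>g. \<Sum>i<n. \<Sum>j<n. c i j * g i * g j)"
  by (intro continuous_map_sum continuous_map_real_mult continuous_map_const[THEN iffD2]
       continuous_map_product_projection) auto

lemma cont_dist:
  "continuous_map (PT n) euclideanreal (\<lambda>g. \<Sum>i<n. (c i - g i)^2)"
  unfolding power2_eq_square
  by (intro continuous_map_sum continuous_map_real_mult continuous_map_diff continuous_map_const[THEN iffD2]
       continuous_map_product_projection) auto

definition tof :: "nat \<Rightarrow> real vec \<Rightarrow> nat \<Rightarrow> real" where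
  "tof n x = restrict (\<lambda>i. x $ i) {..<n}"

lemma tof_top: "tof n x \<in> topspace (PT n)"
  by (simp add: tof_def topspace_product_topology)

lemma vec_tof: "x \<in> carrier_vec n \<Longrightarrow> vec n (tof n x) = x"
  by (auto simp: tof_def)

lemma tof_vec: "g \<in> topspace (PT n) \<Longrightarrow> tof n (vec n g) = g"
  by (auto simp: tof_def topspace_product_topology PiE_def extensional_def)

lemma sprod_sum: "x \<in> carrier_vec n \<Longrightarrow> y \<in> carrier_vec n \<Longrightarrow> x \<bullet> y = (\<Sum>i<n. x $ i * y $ i)"
  by (simp add: scalar_prod_def lessThan_atLeast0)

lemma sq_le_sum: 
  fixes g :: "nat \<Rightarrow> real"
  assumes "i < n" shows "g i ^ 2 \<le> (\<Sum>j<n. g j ^ 2)"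
  using assms by (intro member_le_sum) auto

lemma self_sprod_nonneg: "(x::real vec) \<bullet> x \<ge> 0"
  by (simp add: scalar_prod_def sum_nonneg)

lemma self_sprod_zero: "(x::real vec) \<in> carrier_vec n \<Longrightarrow> x \<bullet> x = 0 \<Longrightarrow> x = 0\<^sub>v n"
proof -
  assume x: "x \<in> carrier_vec n" and z: "x \<bullet> x = 0"
  have "\<forall>i\<in>{0..<n}. x $ i * x $ i = 0"
    using z x by (subst (asm) scalar_prod_def) (simp add: sum_nonneg_eq_0_iff)
  then show ?thesis using x by (intro eq_vecI) auto
qed

lemma quad_zero:
  fixes c d :: real
  assumes "\<forall>t. 0 \<le> t * c + t^2 * d" shows "c = 0"
proof (rule ccontr)
  assume c: "c \<noteq> 0"
  define t where "t = - c / (\<bar>d\<bar> + 1)"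
  have pos: "\<bar>d\<bar> + 1 > 0" by simp
  have "0 \<le> t * c + t^2 * d" using assms by auto
  then have "0 \<le> (t * c + t^2 * d) * (\<bar>d\<bar> + 1)^2" by simp
  also have "(t * c + t^2 * d) * (\<bar>d\<bar> + 1)^2 = c^2 * (d - (\<bar>d\<bar> + 1))"
  proof -
    have tD: "t * (\<bar>d\<bar> + 1) = - c" using pos unfolding t_def by simp
    have "(t * c + t^2 * d) * (\<bar>d\<bar> + 1)^2 = (t * (\<bar>d\<bar> + 1)) * c * (\<bar>d\<bar> + 1) + (t * (\<bar>d\<bar> + 1))^2 * d"
      by (simp add: algebra_simps power2_eq_square)
    also have "\<dots> = c^2 * (d - (\<bar>d\<bar> + 1))" unfolding tD by (simp add: algebra_simps power2_eq_square)
    finally show ?thesis .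
  qed
  finally have "0 \<le> c^2 * (d - (\<bar>d\<bar> + 1))" .
  moreover have "c^2 > 0" using c by simp
  moreover have "d - (\<bar>d\<bar> + 1) < 0" by linarith
  ultimately show False using mult_pos_neg[of "c^2" "d - (\<bar>d\<bar> + 1)"] by linarith
qed

lemma cont_sq:
  "continuous_map (PT n) euclideanreal (\<lambda>g. \<Sum>i<n. (g i)^2)"
  unfolding power2_eq_square
  by (intro continuous_map_sum continuous_map_real_mult
       continuous_map_product_projection) auto

lemma tof_sq: "x \<in> carrier_vec n \<Longrightarrow> (\<Sum>i<n. (tof n x i)^2) = x \<bullet> x"
  by (simp add: sprod_sum tof_def power2_eq_square)

lemma tof_lin: "x \<in> carrier_vec n \<Longrightarrow> z \<in> carrier_vec n \<Longrightarrow> (\<Sum>i<n. z $ i * tof n x i) = x \<bullet> z"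
  by (simp add: sprod_sum tof_def mult.commute)

lemma tof_quad: assumes "x \<in> carrier_vec n" "B \<in> carrier_mat n n"
  shows "(\<Sum>i<n. \<Sum>j<n. B $$ (i,j) * tof n x i * tof n x j) = x \<bullet> (B *\<^sub>v x)"
proof -
  have "x \<bullet> (B *\<^sub>v x) = (\<Sum>i<n. x $ i * (\<Sum>j<n. B $$ (i,j) * x $ j))"
    using assms by (simp add: sprod_sum row_def)
  also have "\<dots> = (\<Sum>i<n. \<Sum>j<n. B $$ (i,j) * x $ i * x $ j)"
    by (simp add: sum_distrib_left mult_ac)
  finally show ?thesis by (simp add: tof_def)
qed

lemma in_box: assumes "g \<in> topspace (PT n)" "(\<Sum>i<n. (g i)^2) \<le> R^2" "R \<ge> 0"
  shows "g \<in> PiE {..<n} (\<lambda>_. {-R..R})"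
proof -
  have "\<bar>g i\<bar> \<le> R" if "i < n" for i
  proof -
    have "(g i)^2 \<le> R^2" using sq_le_sum[OF that, of g] assms(2) by linarith
    then show ?thesis using assms(3) abs_le_square_iff by (metis abs_of_nonneg)
  qed
  then have "\<And>i. i < n \<Longrightarrow> g i \<in> {-R..R}" by (simp add: abs_le_iff) (smt (verit))
  then show ?thesis using assms(1) by (auto simp: topspace_product_topology PiE_def Pi_def)
qed

lemma expand2:
  assumes "a \<in> carrier_vec n" "b \<in> carrier_vec n" "c \<in> carrier_vec n" "d \<in> carrier_vec n"
  shows "(a + t \<cdot>\<^sub>v b) \<bullet> (c + t \<cdot>\<^sub>v d) = a \<bullet> c + t * (a \<bullet> d) + t * (b \<bullet> c) + t^2 * (b \<bullet> (d::real vec))"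
proof -
  have "(a + t \<cdot>\<^sub>v b) \<bullet> (c + t \<cdot>\<^sub>v d) = a \<bullet> (c + t \<cdot>\<^sub>v d) + (t \<cdot>\<^sub>v b) \<bullet> (c + t \<cdot>\<^sub>v d)"
    using assms by (intro add_scalar_prod_distrib[of _ n]) auto
  also have "a \<bullet> (c + t \<cdot>\<^sub>v d) = a \<bullet> c + t * (a \<bullet> d)"
    using assms by (simp add: scalar_prod_add_distrib[of _ n])
  also have "(t \<cdot>\<^sub>v b) \<bullet> (c + t \<cdot>\<^sub>v d) = t * (b \<bullet> c) + t^2 * (b \<bullet> d)"
    using assms by (simp add: scalar_prod_add_distrib[of _ n] power2_eq_square distrib_left)
  finally show ?thesis by simp
qed

lemma rayleigh_max:
  fixes B :: "real mat" and Z :: "real vec set"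
  assumes B: "B \<in> carrier_mat n n" and sym: "transpose_mat B = B" and Z: "Z \<subseteq> carrier_vec n"
    and inv: "\<And>w. w \<in> carrier_vec n \<Longrightarrow> \<forall>z\<in>Z. w \<bullet> z = 0 \<Longrightarrow> \<forall>z\<in>Z. (B *\<^sub>v w) \<bullet> z = 0"
    and e: "e \<in> carrier_vec n" "\<forall>z\<in>Z. e \<bullet> z = 0" "e \<noteq> 0\<^sub>v n"
  shows "\<exists>v l. v \<in> carrier_vec n \<and> v \<noteq> 0\<^sub>v n \<and> (\<forall>z\<in>Z. v \<bullet> z = 0) \<and>
     B *\<^sub>v v = l \<cdot>\<^sub>v v \<and> e \<bullet> (B *\<^sub>v e) \<le> l * (e \<bullet> e)"
proof -
  define F where "F g = (\<Sum>i<n. \<Sum>j<n. B $$ (i,j) * g i * g j)" for g :: "nat \<Rightarrow> real"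
  define K where "K = {g \<in> topspace (PT n). (\<Sum>i<n. (g i)^2) = 1 \<and> (\<forall>z\<in>Z. (\<Sum>i<n. z $ i * g i) = 0)}"
  have Fx: "F (tof n x) = x \<bullet> (B *\<^sub>v x)" if "x \<in> carrier_vec n" for x
    unfolding F_def using tof_quad[OF that B] .
  have Kx: "tof n x \<in> K \<longleftrightarrow> x \<bullet> x = 1 \<and> (\<forall>z\<in>Z. x \<bullet> z = 0)" if "x \<in> carrier_vec n" for x
    using that Z tof_sq[OF that] tof_lin[OF that] tof_top[of n x] unfolding K_def by (auto simp: subsetD)
  have Kcl: "closedin (PT n) K"
  proof -
    have Keq: "K = \<Inter> (insert {g \<in> topspace (PT n). (\<Sum>i<n. (g i)^2) \<in> {1}}
       ((\<lambda>z. {g \<in> topspace (PT n). (\<Sum>i<n. z $ i * g i) \<in> {0}}) ` Z))"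
      unfolding K_def by auto
    have c1: "closedin (PT n) {g \<in> topspace (PT n). (\<Sum>i<n. (g i)^2) \<in> {1}}"
      by (rule closedin_continuous_map_preimage[OF cont_sq]) simp
    have c2: "closedin (PT n) {g \<in> topspace (PT n). (\<Sum>i<n. z $ i * g i) \<in> {0}}" for z
      by (rule closedin_continuous_map_preimage[OF cont_lin]) simp
    have "closedin (PT n) (\<Inter> (insert {g \<in> topspace (PT n). (\<Sum>i<n. (g i)^2) \<in> {1}}
       ((\<lambda>z. {g \<in> topspace (PT n). (\<Sum>i<n. z $ i * g i) \<in> {0}}) ` Z)))"
      by (rule closedin_Inter) (use c1 c2 in auto)
    then show ?thesis unfolding Keq .
  qed
  have Kbox: "K \<subseteq> PiE {..<n} (\<lambda>_. {-1..1})"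
  proof
    fix g assume "g \<in> K"
    then show "g \<in> PiE {..<n} (\<lambda>_. {-1..1})" using in_box[of g n 1] unfolding K_def by simp
  qed
  have ee: "e \<bullet> e > 0" using e self_sprod_zero[of e n] self_sprod_nonneg[of e] by force
  have unit: "tof n ((1 / sqrt (w \<bullet> w)) \<cdot>\<^sub>v w) \<in> K" if w: "w \<in> carrier_vec n" "\<forall>z\<in>Z. w \<bullet> z = 0" "w \<bullet> w > 0" for w
  proof -
    have "((1 / sqrt (w \<bullet> w)) \<cdot>\<^sub>v w) \<bullet> ((1 / sqrt (w \<bullet> w)) \<cdot>\<^sub>v w) = (1 / sqrt (w \<bullet> w))^2 * (w \<bullet> w)"
      using w by (simp add: power2_eq_square)
    also have "\<dots> = 1" using w by (simp add: power_divide)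
    finally show ?thesis using w Z by (subst Kx) auto
  qed
  have Kne: "K \<noteq> {}" using unit[OF e(1,2) ee] by auto
  have "\<exists>x\<in>K. \<forall>y\<in>K. F y \<le> F x"
    unfolding F_def by (rule compact_argmax[OF cont_quad Kcl Kbox Kne])
  then obtain g0 where g0: "g0 \<in> K" and max: "\<And>g. g \<in> K \<Longrightarrow> F g \<le> F g0"
    by blast
  define v where "v = vec n g0"
  have v: "v \<in> carrier_vec n" unfolding v_def by simp
  have tv: "tof n v = g0" unfolding v_def using g0 tof_vec unfolding K_def by auto
  have vK: "v \<bullet> v = 1" "\<forall>z\<in>Z. v \<bullet> z = 0" using Kx[OF v] g0 tv by auto
  define l where "l = v \<bullet> (B *\<^sub>v v)"
  have bound: "w \<bullet> (B *\<^sub>v w) \<le> l * (w \<bullet> w)" if w: "w \<in> carrier_vec n" "\<forall>z\<in>Z. w \<bullet> z = 0" for w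
  proof (cases "w = 0\<^sub>v n")
    case True then show ?thesis using B by simp
  next
    case False
    define s where "s = w \<bullet> w"
    have s: "s > 0" unfolding s_def using w False self_sprod_zero[of w n] self_sprod_nonneg[of w] by force
    define w' where "w' = (1 / sqrt s) \<cdot>\<^sub>v w"
    have w': "w' \<in> carrier_vec n" unfolding w'_def using w by simp
    have "tof n w' \<in> K" unfolding w'_def s_def by (rule unit[OF w s[unfolded s_def]])
    then have "F (tof n w') \<le> F g0" by (rule max)
    then have "w' \<bullet> (B *\<^sub>v w') \<le> l" using Fx[OF w'] Fx[OF v] tv unfolding l_def by simp
    moreover have "w' \<bullet> (B *\<^sub>v w') = (w \<bullet> (B *\<^sub>v w)) / s"
      unfolding w'_def using w B s by (simp add: mult_mat_vec power2_eq_square[symmetric] power_divide)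
    ultimately have "(w \<bullet> (B *\<^sub>v w)) / s \<le> l" by simp
    then show ?thesis using s unfolding s_def by (simp add: divide_le_eq mult.commute)
  qed
  have lag: "u \<bullet> (B *\<^sub>v v) = l * (u \<bullet> v)" if u: "u \<in> carrier_vec n" "\<forall>z\<in>Z. u \<bullet> z = 0" for u
  proof -
    have symm: "v \<bullet> (B *\<^sub>v u) = u \<bullet> (B *\<^sub>v v)"
      using transpose_vec_mult_scalar[OF B u(1) v] sym comm_scalar_prod[of "B *\<^sub>v v" n u] B u v by simp
    have "0 \<le> t * (2 * (l * (u \<bullet> v) - u \<bullet> (B *\<^sub>v v))) + t^2 * (l * (u \<bullet> u) - u \<bullet> (B *\<^sub>v u))" for t
    proof -
      have x: "v + t \<cdot>\<^sub>v u \<in> carrier_vec n" using u v by simp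
      have "\<forall>z\<in>Z. (v + t \<cdot>\<^sub>v u) \<bullet> z = 0" using u vK v Z
        by (auto simp: add_scalar_prod_distrib[of _ n] smult_scalar_prod_distrib[of _ n] subsetD)
      from bound[OF x this]
      have "(v + t \<cdot>\<^sub>v u) \<bullet> (B *\<^sub>v (v + t \<cdot>\<^sub>v u)) \<le> l * ((v + t \<cdot>\<^sub>v u) \<bullet> (v + t \<cdot>\<^sub>v u))" .
      moreover have "(v + t \<cdot>\<^sub>v u) \<bullet> (B *\<^sub>v (v + t \<cdot>\<^sub>v u)) =
          l + t * (v \<bullet> (B *\<^sub>v u)) + t * (u \<bullet> (B *\<^sub>v v)) + t^2 * (u \<bullet> (B *\<^sub>v u))"
      proof -
        have "B *\<^sub>v (v + t \<cdot>\<^sub>v u) = B *\<^sub>v v + t \<cdot>\<^sub>v (B *\<^sub>v u)"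
          using u v B by (simp add: mult_add_distrib_mat_vec[OF B] mult_mat_vec[OF B])
        then show ?thesis using expand2[of v n u "B *\<^sub>v v" "B *\<^sub>v u" t] u v B unfolding l_def by simp
      qed
      moreover have "(v + t \<cdot>\<^sub>v u) \<bullet> (v + t \<cdot>\<^sub>v u) = 1 + 2 * t * (u \<bullet> v) + t^2 * (u \<bullet> u)"
        using expand2[of v n u v u t] u v vK comm_scalar_prod[of u n v] by simp
      ultimately show ?thesis using symm by (simp add: algebra_simps)
    qed
    then have "2 * (l * (u \<bullet> v) - u \<bullet> (B *\<^sub>v v)) = 0" by (intro quad_zero) auto
    then show ?thesis by simp
  qed
  define r where "r = B *\<^sub>v v - l \<cdot>\<^sub>v v"
  have r: "r \<in> carrier_vec n" unfolding r_def using B v by simp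
  have rZ: "\<forall>z\<in>Z. r \<bullet> z = 0" unfolding r_def using inv[OF v vK(2)] vK(2) B v Z
    by (auto simp: minus_scalar_prod_distrib[of _ n] smult_scalar_prod_distrib[of _ n] subsetD)
  have "r \<bullet> r = r \<bullet> (B *\<^sub>v v) - l * (r \<bullet> v)"
  proof -
    have "r \<bullet> r = r \<bullet> (B *\<^sub>v v - l \<cdot>\<^sub>v v)" unfolding r_def ..
    also have "\<dots> = r \<bullet> (B *\<^sub>v v) - r \<bullet> (l \<cdot>\<^sub>v v)"
      using B v r by (intro scalar_prod_minus_distrib[of _ n]) auto
    finally show ?thesis using r v by simp
  qed
  then have "r \<bullet> r = 0" using lag[OF r rZ] by simp
  then have "r = 0\<^sub>v n" using self_sprod_zero[OF r] by simp
  then have Bv: "B *\<^sub>v v = l \<cdot>\<^sub>v v" unfolding r_def using B v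
  proof (intro eq_vecI)
    fix i assume "i < dim_vec (l \<cdot>\<^sub>v v)"
    then have i: "i < n" using v by simp
    have "(B *\<^sub>v v - l \<cdot>\<^sub>v v) $ i = 0" using \<open>r = 0\<^sub>v n\<close> i unfolding r_def by simp
    then show "(B *\<^sub>v v) $ i = (l \<cdot>\<^sub>v v) $ i" using i B v by simp
  qed (use B v in simp)
  have "v \<noteq> 0\<^sub>v n" using vK by auto
  then show ?thesis
    apply (intro exI[of _ v] exI[of _ l])
    using v vK Bv bound[OF e(1,2)] by simp
qed

lemma tof_dist: "x \<in> carrier_vec n \<Longrightarrow> y \<in> carrier_vec n \<Longrightarrow>
   (\<Sum>i<n. (y $ i - tof n x i)^2) = (y - x) \<bullet> (y - x)"
  by (simp add: sprod_sum[of "y - x" n] tof_def power2_eq_square)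

lemma mat_vec_zero_iff: "(A :: real mat) \<in> carrier_mat m n \<Longrightarrow> x \<in> carrier_vec n \<Longrightarrow>
   A *\<^sub>v x = 0\<^sub>v m \<longleftrightarrow> (\<forall>k<m. x \<bullet> row A k = 0)"
  by (auto simp: vec_eq_iff comm_scalar_prod[of x n])

lemma sq_dist_lower: "(y::real vec) \<in> carrier_vec n \<Longrightarrow> q \<in> carrier_vec n \<Longrightarrow>
   (y - q) \<bullet> (y - q) \<ge> (q \<bullet> q) / 2 - y \<bullet> y"
proof -
  assume y: "y \<in> carrier_vec n" and q: "q \<in> carrier_vec n"
  have "(\<Sum>i<n. q $ i * q $ i / 2 - y $ i * y $ i) \<le> (\<Sum>i<n. (y - q) $ i * (y - q) $ i)"
  proof (rule sum_mono)
    fix i assume "i \<in> {..<n}"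
    then have "(y - q) $ i = y $ i - q $ i" using y q by simp
    moreover have "q $ i * q $ i / 2 - y $ i * y $ i \<le> (y $ i - q $ i) * (y $ i - q $ i)"
      using sum_squares_ge_zero[of "2 * y $ i - q $ i" 0] by (simp add: algebra_simps power2_eq_square)
    ultimately show "q $ i * q $ i / 2 - y $ i * y $ i \<le> (y - q) $ i * (y - q) $ i" by simp
  qed
  then show ?thesis using y q
    by (simp add: sprod_sum[of _ n] sum_subtractf sum_divide_distrib)
qed

lemma expand_minus:
  assumes "a \<in> carrier_vec n" "b \<in> carrier_vec n"
  shows "(a - t \<cdot>\<^sub>v b) \<bullet> (a - t \<cdot>\<^sub>v b) = a \<bullet> a - 2 * t * (a \<bullet> b) + t^2 * (b \<bullet> (b::real vec))"
proof -
  have "a - t \<cdot>\<^sub>v b = a + (-t) \<cdot>\<^sub>v b" using assms by (auto simp: vec_eq_iff)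
  then show ?thesis using expand2[OF assms(1,2,1,2), of "-t"] comm_scalar_prod[OF assms] by simp
qed

lemma proj_exists:
  fixes A :: "real mat"
  assumes A: "A \<in> carrier_mat m n" and y: "y \<in> carrier_vec n"
  shows "\<exists>p. p \<in> carrier_vec n \<and> A *\<^sub>v p = 0\<^sub>v m \<and>
     (\<forall>z\<in>carrier_vec n. A *\<^sub>v z = 0\<^sub>v m \<longrightarrow> (y - p) \<bullet> z = 0)"
proof -
  define Y where "Y = y \<bullet> y"
  have Y0: "Y \<ge> 0" unfolding Y_def by (rule self_sprod_nonneg)
  define F where "F g = - (\<Sum>i<n. (y $ i - g i)^2)" for g :: "nat \<Rightarrow> real"
  define K where "K = {g \<in> topspace (PT n). (\<Sum>i<n. (g i)^2) \<le> 4 * Y \<and>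
      (\<forall>k<m. (\<Sum>i<n. row A k $ i * g i) = 0)}"
  have Fx: "F (tof n x) = - ((y - x) \<bullet> (y - x))" if "x \<in> carrier_vec n" for x
    unfolding F_def using tof_dist[OF that y] by simp
  have Kx: "tof n x \<in> K \<longleftrightarrow> x \<bullet> x \<le> 4 * Y \<and> A *\<^sub>v x = 0\<^sub>v m" if x: "x \<in> carrier_vec n" for x
  proof -
    have r: "row A k \<in> carrier_vec n" for k using A by (metis carrier_matD(2) row_carrier)
    have "tof n x \<in> K \<longleftrightarrow> (\<Sum>i<n. (tof n x i)^2) \<le> 4 * Y \<and> (\<forall>k<m. (\<Sum>i<n. row A k $ i * tof n x i) = 0)"
      unfolding K_def using tof_top[of n x] by blast
    also have "\<dots> \<longleftrightarrow> x \<bullet> x \<le> 4 * Y \<and> (\<forall>k<m. x \<bullet> row A k = 0)"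
      by (simp only: tof_sq[OF x] tof_lin[OF x r])
    also have "\<dots> \<longleftrightarrow> x \<bullet> x \<le> 4 * Y \<and> A *\<^sub>v x = 0\<^sub>v m"
      by (simp only: mat_vec_zero_iff[OF A x])
    finally show ?thesis .
  qed
  have Kcl: "closedin (PT n) K"
  proof -
    have Keq: "K = \<Inter> (insert {g \<in> topspace (PT n). (\<Sum>i<n. (g i)^2) \<in> {..4 * Y}}
       ((\<lambda>k. {g \<in> topspace (PT n). (\<Sum>i<n. row A k $ i * g i) \<in> {0}}) ` {..<m}))"
      unfolding K_def by auto
    have c1: "closedin (PT n) {g \<in> topspace (PT n). (\<Sum>i<n. (g i)^2) \<in> {..4 * Y}}"
      by (rule closedin_continuous_map_preimage[OF cont_sq]) simp
    have c2: "closedin (PT n) {g \<in> topspace (PT n). (\<Sum>i<n. row A k $ i * g i) \<in> {0}}" for k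
      by (rule closedin_continuous_map_preimage[OF cont_lin]) simp
    have "closedin (PT n) (\<Inter> (insert {g \<in> topspace (PT n). (\<Sum>i<n. (g i)^2) \<in> {..4 * Y}}
       ((\<lambda>k. {g \<in> topspace (PT n). (\<Sum>i<n. row A k $ i * g i) \<in> {0}}) ` {..<m})))"
      by (rule closedin_Inter) (use c1 c2 in auto)
    then show ?thesis unfolding Keq .
  qed
  have Kbox: "K \<subseteq> PiE {..<n} (\<lambda>_. {-(2 * Y + 1)..2 * Y + 1})"
  proof
    fix g assume g: "g \<in> K"
    have h: "(2 * Y + 1)^2 = 4 * Y + (4 * Y * Y + 1)" by (simp add: power2_eq_square algebra_simps)
    have "4 * Y * Y \<ge> 0" using Y0 by simp
    then have le: "4 * Y \<le> (2 * Y + 1)^2" unfolding h by linarith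
    have g1: "g \<in> topspace (PT n)" and g2: "(\<Sum>i<n. (g i)^2) \<le> 4 * Y" using g unfolding K_def by auto
    show "g \<in> PiE {..<n} (\<lambda>_. {-(2 * Y + 1)..2 * Y + 1})"
      by (rule in_box[OF g1]) (use g2 le Y0 in linarith)+
  qed
  have zK: "tof n (0\<^sub>v n) \<in> K" using A Y0 by (subst Kx) auto
  then have Kne: "K \<noteq> {}" by auto
  have "\<exists>x\<in>K. \<forall>g\<in>K. F g \<le> F x"
    unfolding F_def by (rule compact_argmax[OF _ Kcl Kbox Kne]) (rule continuous_map_minus[OF cont_dist])
  then obtain g0 where g0: "g0 \<in> K" and max: "\<And>g. g \<in> K \<Longrightarrow> F g \<le> F g0"
    by blast
  define p where "p = vec n g0"
  have p: "p \<in> carrier_vec n" unfolding p_def by simp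
  have tp: "tof n p = g0" unfolding p_def using g0 tof_vec unfolding K_def by auto
  have pK: "p \<bullet> p \<le> 4 * Y" "A *\<^sub>v p = 0\<^sub>v m" using Kx[OF p] g0 tp by auto
  have glob: "(y - p) \<bullet> (y - p) \<le> (y - q) \<bullet> (y - q)" if q: "q \<in> carrier_vec n" "A *\<^sub>v q = 0\<^sub>v m" for q
  proof (cases "q \<bullet> q \<le> 4 * Y")
    case True
    then have "tof n q \<in> K" using Kx[OF q(1)] q by simp
    from max[OF this] show ?thesis using Fx[OF q(1)] Fx[OF p] tp by simp
  next
    case False
    from max[OF zK] have "(y - p) \<bullet> (y - p) \<le> (y - 0\<^sub>v n) \<bullet> (y - 0\<^sub>v n)"
      using Fx[OF p] Fx[of "0\<^sub>v n"] tp by simp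
    also have "(y - 0\<^sub>v n) = y" using y by auto
    also have "y \<bullet> y = Y" unfolding Y_def ..
    also have "Y \<le> (q \<bullet> q) / 2 - y \<bullet> y" using False unfolding Y_def by simp
    also have "\<dots> \<le> (y - q) \<bullet> (y - q)" by (rule sq_dist_lower[OF y q(1)])
    finally show ?thesis .
  qed
  have orth: "(y - p) \<bullet> z = 0" if z: "z \<in> carrier_vec n" "A *\<^sub>v z = 0\<^sub>v m" for z
  proof -
    have "0 \<le> t * (- 2 * ((y - p) \<bullet> z)) + t^2 * (z \<bullet> z)" for t
    proof -
      have q: "p + t \<cdot>\<^sub>v z \<in> carrier_vec n" using p z by simp
      have "A *\<^sub>v (p + t \<cdot>\<^sub>v z) = 0\<^sub>v m"
        using A p z pK by (simp add: mult_add_distrib_mat_vec[OF A] mult_mat_vec[OF A] vec_eq_iff)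
      from glob[OF q this] have "(y - p) \<bullet> (y - p) \<le> (y - (p + t \<cdot>\<^sub>v z)) \<bullet> (y - (p + t \<cdot>\<^sub>v z))" .
      also have "y - (p + t \<cdot>\<^sub>v z) = (y - p) - t \<cdot>\<^sub>v z" using y p z by (auto simp: vec_eq_iff)
      also have "((y - p) - t \<cdot>\<^sub>v z) \<bullet> ((y - p) - t \<cdot>\<^sub>v z) =
         (y - p) \<bullet> (y - p) - 2 * t * ((y - p) \<bullet> z) + t^2 * (z \<bullet> z)"
        by (rule expand_minus) (use y p z in auto)
      finally show ?thesis by (simp add: algebra_simps)
    qed
    then have "- 2 * ((y - p) \<bullet> z) = 0" by (intro quad_zero) auto
    then show ?thesis by simp
  qed
  show ?thesis using p pK orth by blast
qed



lemma proj_null_props: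
  fixes A :: "real mat"
  assumes A: "A \<in> carrier_mat m n" and y: "y \<in> carrier_vec n"
  shows "proj_null A y \<in> carrier_vec n \<and> A *\<^sub>v proj_null A y = 0\<^sub>v m \<and>
     (\<forall>z\<in>carrier_vec n. A *\<^sub>v z = 0\<^sub>v m \<longrightarrow> (y - proj_null A y) \<bullet> z = 0)"
proof -
  have dims: "dim_col A = n" "dim_row A = m" using A by auto
  let ?P = "\<lambda>p. p \<in> carrier_vec n \<and> A *\<^sub>v p = 0\<^sub>v m \<and>
     (\<forall>z\<in>carrier_vec n. A *\<^sub>v z = 0\<^sub>v m \<longrightarrow> (y - p) \<bullet> z = 0)"
  have ex: "\<exists>p. ?P p" by (rule proj_exists[OF A y])
  have uniq: "p1 = p2" if p1: "?P p1" and p2: "?P p2" for p1 p2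
  proof -
    define d where "d = p1 - p2"
    have d: "d \<in> carrier_vec n" unfolding d_def using p1 p2 by simp
    have Ad: "A *\<^sub>v d = 0\<^sub>v m" unfolding d_def using p1 p2 A
      by (simp add: mult_minus_distrib_mat_vec[OF A] vec_eq_iff)
    have e: "(y - p2) - (y - p1) = d" unfolding d_def using p1 p2 y by (auto simp: vec_eq_iff)
    have "d \<bullet> d = (y - p2) \<bullet> d - (y - p1) \<bullet> d"
      unfolding e[symmetric] using p1 p2 y d by (intro minus_scalar_prod_distrib[of _ n]) auto
    also have "\<dots> = 0" using p1 p2 d Ad by simp
    finally have "d = 0\<^sub>v n" using self_sprod_zero[OF d] by simp
    then show ?thesis unfolding d_def using p1 p2 by (auto simp: vec_eq_iff)
  qed
  have "?P (THE p. ?P p)" by (rule theI') (use ex uniq in blast)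
  then show ?thesis unfolding proj_null_def dims .
qed

lemma sv_finite:
  assumes Q: "Q \<in> carrier_mat n n"
  shows "finite {s. singular_value Q s \<and> 0 < s \<and> s < 1}"
proof -
  define B where "B = transpose_mat Q * Q"
  have B: "B \<in> carrier_mat n n" unfolding B_def using Q by simp
  have cp: "char_poly B \<noteq> 0" using degree_monic_char_poly[OF B] by auto
  have "{s. singular_value Q s \<and> 0 < s \<and> s < 1} \<subseteq> sqrt ` {r. poly (char_poly B) r = 0}"
  proof
    fix s assume "s \<in> {s. singular_value Q s \<and> 0 < s \<and> s < 1}"
    then have s: "s \<ge> 0" "eigenvalue B (s^2)" unfolding singular_value_def B_def by auto
    then have "poly (char_poly B) (s^2) = 0" using eigenvalue_root_char_poly[OF B] by simp
    moreover have "s = sqrt (s^2)" using s by simp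
    ultimately show "s \<in> sqrt ` {r. poly (char_poly B) r = 0}" by blast
  qed
  moreover have "finite {r. poly (char_poly B) r = 0}" by (rule poly_roots_finite[OF cp])
  ultimately show ?thesis using finite_subset by blast
qed

lemma max_sv01_ge: assumes Q: "Q \<in> carrier_mat n n"
  shows "max_sv01 Q \<ge> 0" and "singular_value Q s \<Longrightarrow> 0 < s \<Longrightarrow> s < 1 \<Longrightarrow> s \<le> max_sv01 Q"
  unfolding max_sv01_def using sv_finite[OF Q] by (auto intro: Max_ge)

lemma sv_bound:
  fixes Q :: "real mat" and Z :: "real vec set"
  assumes Q: "Q \<in> carrier_mat n n" and Z: "Z \<subseteq> carrier_vec n"
    and contr: "\<And>x. x \<in> carrier_vec n \<Longrightarrow> (Q *\<^sub>v x) \<bullet> (Q *\<^sub>v x) \<le> x \<bullet> x"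
    and eqZ: "\<And>x. x \<in> carrier_vec n \<Longrightarrow> (Q *\<^sub>v x) \<bullet> (Q *\<^sub>v x) = x \<bullet> x \<Longrightarrow> x \<in> Z"
    and QZ: "\<And>z. z \<in> Z \<Longrightarrow> Q *\<^sub>v z = z"
    and QTZ: "\<And>z. z \<in> Z \<Longrightarrow> transpose_mat Q *\<^sub>v z = z"
    and e: "e \<in> carrier_vec n" "\<forall>z\<in>Z. e \<bullet> z = 0"
  shows "(Q *\<^sub>v e) \<bullet> (Q *\<^sub>v e) \<le> (max_sv01 Q)^2 * (e \<bullet> e)"
proof (cases "e = 0\<^sub>v n")
  case True
  then have "e \<bullet> e = 0" by simp
  then show ?thesis using contr[OF e(1)] by simp
next
  case False
  define B where "B = transpose_mat Q * Q"
  have B: "B \<in> carrier_mat n n" unfolding B_def using Q by simp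
  have symB: "transpose_mat B = B" unfolding B_def using Q by (simp add: transpose_mult[of _ n n _ n])
  have BQ: "x \<bullet> (B *\<^sub>v x) = (Q *\<^sub>v x) \<bullet> (Q *\<^sub>v x)" if x: "x \<in> carrier_vec n" for x
  proof -
    have "B *\<^sub>v x = transpose_mat Q *\<^sub>v (Q *\<^sub>v x)" unfolding B_def using Q x
      by (intro assoc_mult_mat_vec) auto
    moreover have "B *\<^sub>v x \<in> carrier_vec n" using B x by simp
    ultimately have "x \<bullet> (B *\<^sub>v x) = (transpose_mat Q *\<^sub>v (Q *\<^sub>v x)) \<bullet> x"
      using comm_scalar_prod[OF x, of "B *\<^sub>v x"] by simp
    also have "\<dots> = (Q *\<^sub>v x) \<bullet> (Q *\<^sub>v x)" using transpose_vec_mult_scalar[OF Q x, of "Q *\<^sub>v x"] Q x by simp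
    finally show ?thesis .
  qed
  have inv: "\<forall>z\<in>Z. (B *\<^sub>v w) \<bullet> z = 0" if w: "w \<in> carrier_vec n" "\<forall>z\<in>Z. w \<bullet> z = 0" for w
  proof
    fix z assume z: "z \<in> Z"
    have zc: "z \<in> carrier_vec n" using z Z by auto
    have "B *\<^sub>v w = transpose_mat Q *\<^sub>v (Q *\<^sub>v w)" unfolding B_def using Q w
      by (intro assoc_mult_mat_vec) auto
    then have "(B *\<^sub>v w) \<bullet> z = (Q *\<^sub>v w) \<bullet> (Q *\<^sub>v z)"
      using transpose_vec_mult_scalar[OF Q zc, of "Q *\<^sub>v w"] Q w by simp
    also have "\<dots> = (Q *\<^sub>v w) \<bullet> z" using QZ[OF z] by simp
    also have "\<dots> = z \<bullet> (Q *\<^sub>v w)" using comm_scalar_prod[of z n "Q *\<^sub>v w"] zc Q w by simp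
    also have "\<dots> = (transpose_mat Q *\<^sub>v z) \<bullet> w" using transpose_vec_mult_scalar[OF Q w(1) zc] by simp
    also have "\<dots> = 0" using QTZ[OF z] w z comm_scalar_prod[of z n w] zc by simp
    finally show "(B *\<^sub>v w) \<bullet> z = 0" .
  qed
  obtain v l where v: "v \<in> carrier_vec n" "v \<noteq> 0\<^sub>v n" "\<forall>z\<in>Z. v \<bullet> z = 0"
    and Bv: "B *\<^sub>v v = l \<cdot>\<^sub>v v" and le: "e \<bullet> (B *\<^sub>v e) \<le> l * (e \<bullet> e)"
    using rayleigh_max[OF B symB Z inv e False] by blast
  have vv: "v \<bullet> v > 0" using v self_sprod_zero[of v n] self_sprod_nonneg[of v] by force
  have lvv: "l * (v \<bullet> v) = (Q *\<^sub>v v) \<bullet> (Q *\<^sub>v v)" using BQ[OF v(1)] Bv v by simp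
  have l0: "l \<ge> 0"
  proof -
    have "l * (v \<bullet> v) \<ge> 0" unfolding lvv by (rule self_sprod_nonneg)
    then show ?thesis using vv by (simp add: zero_le_mult_iff)
  qed
  have l1: "l < 1"
  proof (rule ccontr)
    assume "\<not> l < 1"
    moreover have "l * (v \<bullet> v) \<le> v \<bullet> v" unfolding lvv by (rule contr[OF v(1)])
    ultimately have "l = 1" using vv by (metis less_le mult_le_cancel_right2 not_le)
    then have "(Q *\<^sub>v v) \<bullet> (Q *\<^sub>v v) = v \<bullet> v" using lvv by simp
    then have "v \<in> Z" by (rule eqZ[OF v(1)])
    then have "v \<bullet> v = 0" using v(3) by blast
    then show False using vv by simp
  qed
  have ls: "l \<le> (max_sv01 Q)^2"
  proof (cases "l = 0")
    case True then show ?thesis by simp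
  next
    case False
    then have lpos: "l > 0" using l0 by simp
    have "singular_value Q (sqrt l)"
      unfolding singular_value_def eigenvalue_def eigenvector_def
      using l0 v Bv Q B by (auto simp: B_def[symmetric] carrier_matD)
    moreover have "0 < sqrt l" "sqrt l < 1" using lpos l1 by auto
    ultimately have "sqrt l \<le> max_sv01 Q" using max_sv01_ge(2)[OF Q] by blast
    then have "(sqrt l)^2 \<le> (max_sv01 Q)^2" using lpos by (intro power_mono) auto
    then show ?thesis using l0 by simp
  qed
  have "(Q *\<^sub>v e) \<bullet> (Q *\<^sub>v e) \<le> l * (e \<bullet> e)" using le BQ[OF e(1)] by simp
  also have "\<dots> \<le> (max_sv01 Q)^2 * (e \<bullet> e)" using ls self_sprod_nonneg[of e] by (intro mult_right_mono)
  finally show ?thesis .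
qed



lemma vnorm2_sq: "(vnorm2 v)^2 = v \<bullet> v"
  unfolding vnorm2_def by (simp add: self_sprod_nonneg)

lemma mv_idx: "M \<in> carrier_mat k n \<Longrightarrow> v \<in> carrier_vec n \<Longrightarrow> i < k \<Longrightarrow>
  (M *\<^sub>v v) $ i = (\<Sum>j<n. M $$ (i,j) * v $ j)"
  by (simp add: scalar_prod_def lessThan_atLeast0 row_def)

lemma diag_mv: assumes "v \<in> carrier_vec m" "i < m"
  shows "(mat m m (\<lambda>(i,j). if i = j then d i else 0) *\<^sub>v v) $ i = d i * v $ i"
proof -
  have "(mat m m (\<lambda>(i,j). if i = j then d i else 0) *\<^sub>v v) $ i =
     (\<Sum>j<m. (if i = j then d i else 0) * v $ j)"
    using assms by (subst mv_idx[of _ m m]) auto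
  also have "\<dots> = (\<Sum>j<m. if i = j then d i * v $ j else 0)"
    by (rule sum.cong) auto
  also have "\<dots> = d i * v $ i" using assms by simp
  finally show ?thesis .
qed

lemma Pmat_carrier: "Pmat A u k \<in> carrier_mat (dim_col A) (dim_col A)"
  unfolding carrier_mat_def Pmat_def outer_def by simp

lemma Qfrom_carrier: "Qfrom A u j \<in> carrier_mat (dim_col A) (dim_col A)"
proof -
  have "foldr (\<lambda>k M. M * Pmat A u k) ks (1\<^sub>m (dim_col A)) \<in> carrier_mat (dim_col A) (dim_col A)" for ks
    by (induction ks) (auto intro: mult_carrier_mat Pmat_carrier)
  then show ?thesis unfolding Qfrom_def .
qed

lemma Qfrom_Suc: "j < dim_row A \<Longrightarrow> Qfrom A u j = Qfrom A u (Suc j) * Pmat A u j"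
  unfolding Qfrom_def by (simp add: upt_conv_Cons)

lemma Qfrom_ge: "dim_row A \<le> j \<Longrightarrow> Qfrom A u j = 1\<^sub>m (dim_col A)"
  unfolding Qfrom_def by simp

lemma Pmat_vec:
  assumes x: "x \<in> carrier_vec (dim_col A)"
  shows "Pmat A u k *\<^sub>v x = x - (u k / (row A k \<bullet> row A k) * (row A k \<bullet> x)) \<cdot>\<^sub>v row A k"
proof (rule eq_vecI)
  let ?n = "dim_col A"
  let ?a = "row A k"
  define c where "c = u k / (?a \<bullet> ?a)"
  have a: "?a \<in> carrier_vec ?n" by simp
  show "dim_vec (Pmat A u k *\<^sub>v x) = dim_vec (x - (u k / (?a \<bullet> ?a) * (?a \<bullet> x)) \<cdot>\<^sub>v ?a)"
    using x by (simp add: Pmat_def outer_def)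
  fix i assume "i < dim_vec (x - (u k / (?a \<bullet> ?a) * (?a \<bullet> x)) \<cdot>\<^sub>v ?a)"
  then have i: "i < ?n" using x by simp
  have "(Pmat A u k *\<^sub>v x) $ i = (\<Sum>j<?n. Pmat A u k $$ (i,j) * x $ j)"
    by (rule mv_idx[OF Pmat_carrier x i])
  also have "\<dots> = (\<Sum>j<?n. (if i = j then x $ j else 0) - c * ?a $ i * (?a $ j * x $ j))"
    by (rule sum.cong) (use i in \<open>auto simp: Pmat_def outer_def c_def vnorm2_sq algebra_simps\<close>)
  also have "\<dots> = x $ i - c * ?a $ i * (?a \<bullet> x)"
    using i x by (simp add: sum_subtractf sum_distrib_left[symmetric] sprod_sum[of _ ?n])
  finally show "(Pmat A u k *\<^sub>v x) $ i = (x - (u k / (?a \<bullet> ?a) * (?a \<bullet> x)) \<cdot>\<^sub>v ?a) $ i"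
    using i x unfolding c_def by simp
qed

lemma Pmat_norm:
  assumes x: "x \<in> carrier_vec (dim_col A)" and aa: "row A k \<bullet> row A k > 0"
  shows "(Pmat A u k *\<^sub>v x) \<bullet> (Pmat A u k *\<^sub>v x) =
     x \<bullet> x - u k * (2 - u k) * (row A k \<bullet> x)^2 / (row A k \<bullet> row A k)"
proof -
  let ?a = "row A k"
  define t where "t = u k / (?a \<bullet> ?a) * (?a \<bullet> x)"
  have a: "?a \<in> carrier_vec (dim_col A)" by simp
  have "(Pmat A u k *\<^sub>v x) \<bullet> (Pmat A u k *\<^sub>v x) = (x - t \<cdot>\<^sub>v ?a) \<bullet> (x - t \<cdot>\<^sub>v ?a)"
    unfolding Pmat_vec[OF x] t_def ..
  also have "\<dots> = x \<bullet> x - 2 * t * (x \<bullet> ?a) + t^2 * (?a \<bullet> ?a)"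
    by (rule expand_minus[OF x a])
  also have "x \<bullet> ?a = ?a \<bullet> x" using comm_scalar_prod[OF x a] .
  also have "x \<bullet> x - 2 * t * (?a \<bullet> x) + t^2 * (?a \<bullet> ?a) =
     x \<bullet> x - u k * (2 - u k) * (?a \<bullet> x)^2 / (?a \<bullet> ?a)"
    unfolding t_def using aa by (simp add: field_simps power2_eq_square)
  finally show ?thesis .
qed

lemma row_sprod_pos: "row (A::real mat) i \<noteq> 0\<^sub>v (dim_col A) \<Longrightarrow> row A i \<bullet> row A i > 0"
  using self_sprod_zero[of "row A i" "dim_col A"] self_sprod_nonneg[of "row A i"] by force

lemma Qfrom_contr:
  assumes nz: "\<forall>i<dim_row A. row A i \<noteq> 0\<^sub>v (dim_col A)"
    and mu: "\<forall>i<dim_row A. 0 < u i \<and> u i < 2"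
  shows "x \<in> carrier_vec (dim_col A) \<Longrightarrow>
    (Qfrom A u j *\<^sub>v x) \<bullet> (Qfrom A u j *\<^sub>v x) \<le> x \<bullet> x \<and>
    ((Qfrom A u j *\<^sub>v x) \<bullet> (Qfrom A u j *\<^sub>v x) = x \<bullet> x \<longrightarrow>
       (\<forall>i. j \<le> i \<and> i < dim_row A \<longrightarrow> row A i \<bullet> x = 0))"
proof (induction "dim_row A - j" arbitrary: j x)
  case 0
  then have "Qfrom A u j = 1\<^sub>m (dim_col A)" by (intro Qfrom_ge) simp
  then show ?case using 0 by auto
next
  case (Suc d)
  let ?n = "dim_col A"
  have j: "j < dim_row A" using Suc(2) by simp
  let ?a = "row A j"
  let ?Q = "Qfrom A u (Suc j)"
  define y where "y = Pmat A u j *\<^sub>v x"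
  have y: "y \<in> carrier_vec ?n" unfolding y_def by (rule mult_mat_vec_carrier[OF Pmat_carrier Suc(3)])
  have Qx: "Qfrom A u j *\<^sub>v x = ?Q *\<^sub>v y"
    unfolding y_def Qfrom_Suc[OF j] by (rule assoc_mult_mat_vec[OF Qfrom_carrier Pmat_carrier Suc(3)])
  have aa: "?a \<bullet> ?a > 0" using nz j row_sprod_pos by blast
  have yy: "y \<bullet> y = x \<bullet> x - u j * (2 - u j) * (?a \<bullet> x)^2 / (?a \<bullet> ?a)"
    unfolding y_def by (rule Pmat_norm[OF Suc(3) aa])
  have nonneg: "u j * (2 - u j) * (?a \<bullet> x)^2 / (?a \<bullet> ?a) \<ge> 0"
    using mu j aa by (intro divide_nonneg_pos mult_nonneg_nonneg) auto
  have IH: "(?Q *\<^sub>v y) \<bullet> (?Q *\<^sub>v y) \<le> y \<bullet> y \<and>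
    ((?Q *\<^sub>v y) \<bullet> (?Q *\<^sub>v y) = y \<bullet> y \<longrightarrow> (\<forall>i. Suc j \<le> i \<and> i < dim_row A \<longrightarrow> row A i \<bullet> y = 0))"
    using Suc(1)[of "Suc j" y] Suc(2) y by simp
  have le: "(Qfrom A u j *\<^sub>v x) \<bullet> (Qfrom A u j *\<^sub>v x) \<le> x \<bullet> x"
    using IH yy nonneg unfolding Qx by linarith
  moreover have "\<forall>i. j \<le> i \<and> i < dim_row A \<longrightarrow> row A i \<bullet> x = 0"
    if eq: "(Qfrom A u j *\<^sub>v x) \<bullet> (Qfrom A u j *\<^sub>v x) = x \<bullet> x"
  proof -
    have "u j * (2 - u j) * (?a \<bullet> x)^2 / (?a \<bullet> ?a) = 0"
      using IH yy nonneg eq unfolding Qx by linarith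
    then have "u j = 0 \<or> u j = 2 \<or> ?a \<bullet> x = 0" using aa by simp
    moreover have "0 < u j" "u j < 2" using mu j by auto
    ultimately have ax: "?a \<bullet> x = 0" by auto
    have "y = x - (u j / (?a \<bullet> ?a) * 0) \<cdot>\<^sub>v ?a" unfolding y_def Pmat_vec[OF Suc(3)] ax ..
    also have "\<dots> = x" using Suc(3) by (auto simp: vec_eq_iff)
    finally have "y = x" .
    then have "(?Q *\<^sub>v y) \<bullet> (?Q *\<^sub>v y) = y \<bullet> y" using eq unfolding Qx by simp
    then have "\<forall>i. Suc j \<le> i \<and> i < dim_row A \<longrightarrow> row A i \<bullet> x = 0" using IH \<open>y = x\<close> by simp
    then show ?thesis using ax by (metis le_antisym not_less_eq_eq)
  qed
  ultimately show ?case by blast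
qed

lemma Q_identity:
  assumes x: "x \<in> carrier_vec (dim_col A)" and l: "l < dim_col A"
  shows "x $ l - (Qmat A u *\<^sub>v x) $ l = (\<Sum>i<dim_row A. (Qfrom A u (Suc i) *\<^sub>v row A i) $ l *
            (u i / (row A i \<bullet> row A i) * (row A i \<bullet> x)))"
proof -
  define f where "f i = (Qfrom A u i *\<^sub>v x) $ l" for i
  have fm: "f (dim_row A) = x $ l" unfolding f_def using Qfrom_ge[of A "dim_row A" u] x by simp
  have step: "f (Suc i) - f i = (Qfrom A u (Suc i) *\<^sub>v row A i) $ l *
            (u i / (row A i \<bullet> row A i) * (row A i \<bullet> x))" if i: "i < dim_row A" for i
  proof -
    let ?Q = "Qfrom A u (Suc i)"
    let ?a = "row A i"
    define t where "t = u i / (?a \<bullet> ?a) * (?a \<bullet> x)"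
    have a: "?a \<in> carrier_vec (dim_col A)" by simp
    have "Qfrom A u i *\<^sub>v x = ?Q *\<^sub>v (Pmat A u i *\<^sub>v x)"
      unfolding Qfrom_Suc[OF i] by (rule assoc_mult_mat_vec[OF Qfrom_carrier Pmat_carrier x])
    also have "Pmat A u i *\<^sub>v x = x - t \<cdot>\<^sub>v ?a" unfolding Pmat_vec[OF x] t_def ..
    also have "?Q *\<^sub>v (x - t \<cdot>\<^sub>v ?a) = ?Q *\<^sub>v x - ?Q *\<^sub>v (t \<cdot>\<^sub>v ?a)"
      using x a by (intro mult_minus_distrib_mat_vec[OF Qfrom_carrier]) auto
    also have "?Q *\<^sub>v (t \<cdot>\<^sub>v ?a) = t \<cdot>\<^sub>v (?Q *\<^sub>v ?a)"
      by (rule mult_mat_vec[OF Qfrom_carrier a])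
    finally have "Qfrom A u i *\<^sub>v x = ?Q *\<^sub>v x - t \<cdot>\<^sub>v (?Q *\<^sub>v ?a)" .
    then have "f i = f (Suc i) - t * (?Q *\<^sub>v ?a) $ l"
      unfolding f_def using l Qfrom_carrier[of A u "Suc i"] by (simp add: carrier_matD)
    then show ?thesis unfolding t_def by (simp add: mult.commute)
  qed
  have "(\<Sum>i<dim_row A. f (Suc i) - f i) = f (dim_row A) - f 0" by (rule sum_lessThan_telescope)
  then have "x $ l - f 0 = (\<Sum>i<dim_row A. f (Suc i) - f i)" using fm by simp
  also have "\<dots> = (\<Sum>i<dim_row A. (Qfrom A u (Suc i) *\<^sub>v row A i) $ l *
            (u i / (row A i \<bullet> row A i) * (row A i \<bullet> x)))"
    by (rule sum.cong) (auto simp: step)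
  finally show ?thesis unfolding f_def Qmat_def .
qed

lemma G_identity:
  assumes A: "A \<in> carrier_mat m n" and C: "C \<in> carrier_mat m m" and AS: "A_S A u = C * A"
    and x: "x \<in> carrier_vec n"
  shows "(transpose_mat A * transpose_mat C * Lambda_mat m u * M_mat A) *\<^sub>v (A *\<^sub>v x) = x - Qmat A u *\<^sub>v x"
proof -
  have dA: "dim_row A = m" "dim_col A = n" using A by auto
  define w0 where "w0 = A *\<^sub>v x"
  define w1 where "w1 = M_mat A *\<^sub>v w0"
  define w2 where "w2 = Lambda_mat m u *\<^sub>v w1"
  have Mc: "M_mat A \<in> carrier_mat m m" unfolding M_mat_def dA by simp
  have Lc: "Lambda_mat m u \<in> carrier_mat m m" unfolding Lambda_mat_def by simp
  have w0: "w0 \<in> carrier_vec m" unfolding w0_def using A x by simp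
  have w1: "w1 \<in> carrier_vec m" unfolding w1_def using Mc w0 by simp
  have w2: "w2 \<in> carrier_vec m" unfolding w2_def using Lc w1 by simp
  define T where "T = transpose_mat A * transpose_mat C"
  have Tc: "T \<in> carrier_mat n m" unfolding T_def using A C by simp
  have T: "T = transpose_mat (A_S A u)" unfolding AS T_def by (rule transpose_mult[OF C A, symmetric])
  have "(T * Lambda_mat m u * M_mat A) *\<^sub>v w0 = (T * Lambda_mat m u) *\<^sub>v w1"
    unfolding w1_def using Tc Lc Mc w0 by (intro assoc_mult_mat_vec) auto
  also have "\<dots> = T *\<^sub>v w2" unfolding w2_def using Tc Lc w1 by (intro assoc_mult_mat_vec) auto
  finally have G: "(T * Lambda_mat m u * M_mat A) *\<^sub>v w0 = T *\<^sub>v w2" .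
  have Qc: "Qmat A u \<in> carrier_mat n n" unfolding Qmat_def using Qfrom_carrier[of A u 0] dA by simp
  have ASc: "A_S A u \<in> carrier_mat m n" unfolding A_S_def dA by simp
  have "T *\<^sub>v w2 = x - Qmat A u *\<^sub>v x"
  proof (rule eq_vecI)
    show "dim_vec (T *\<^sub>v w2) = dim_vec (x - Qmat A u *\<^sub>v x)" using Tc x Qc by simp
    fix l assume "l < dim_vec (x - Qmat A u *\<^sub>v x)"
    then have l: "l < n" using x Qc by simp
    have "(T *\<^sub>v w2) $ l = (\<Sum>i<m. T $$ (l,i) * w2 $ i)" by (rule mv_idx[OF Tc w2 l])
    also have "\<dots> = (\<Sum>i<m. (Qfrom A u (Suc i) *\<^sub>v row A i) $ l *
            (u i / (row A i \<bullet> row A i) * (row A i \<bullet> x)))"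
    proof (rule sum.cong)
      fix i assume "i \<in> {..<m}"
      then have i: "i < m" by simp
      have "T $$ (l,i) = (Qfrom A u (Suc i) *\<^sub>v row A i) $ l"
        unfolding T using i l ASc dA by (simp add: A_S_def)
      moreover have "w2 $ i = u i * w1 $ i" unfolding w2_def Lambda_mat_def by (rule diag_mv[OF w1 i])
      moreover have "w1 $ i = 1 / (vnorm2 (row A i))^2 * w0 $ i"
        unfolding w1_def M_mat_def dA by (rule diag_mv[OF w0 i])
      moreover have "w0 $ i = row A i \<bullet> x" unfolding w0_def using i A by simp
      ultimately show "T $$ (l,i) * w2 $ i = (Qfrom A u (Suc i) *\<^sub>v row A i) $ l *
            (u i / (row A i \<bullet> row A i) * (row A i \<bullet> x))" by (simp add: vnorm2_sq)
    qed simp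
    also have "\<dots> = x $ l - (Qmat A u *\<^sub>v x) $ l"
      using Q_identity[of x A l u] x l dA by simp
    also have "\<dots> = (x - Qmat A u *\<^sub>v x) $ l"
      using x l Qfrom_carrier[of A u 0] dA by (simp add: Qmat_def)
    finally show "(T *\<^sub>v w2) $ l = (x - Qmat A u *\<^sub>v x) $ l" .
  qed
  then show ?thesis using G unfolding T_def w0_def by simp
qed

theorem corollary3p13:
  fixes A C :: "real mat" and b xdag :: "real vec" and mu :: "nat \<Rightarrow> real"
    and y :: "nat \<Rightarrow> real vec" and m n :: nat
  assumes A: "A \<in> carrier_mat m n"
    and nozero: "\<forall>i<m. row A i \<noteq> 0\<^sub>v n"
    and b: "b \<in> carrier_vec m"
    and consistent: "\<exists>x \<in> carrier_vec n. A *\<^sub>v x = b"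
    and xdag: "min_norm_lsq A b xdag"
    and mu: "\<forall>i<m. 0 < mu i \<and> mu i < 2"
    and C: "C \<in> carrier_mat m m" "upper_triangular C" "\<forall>i<m. C $$ (i,i) = 1"
    and AS: "A_S A mu = C * A"
    and y0: "y 0 \<in> carrier_vec n"
    and ystep: "\<forall>k. y (Suc k) = y k + (transpose_mat A * transpose_mat C * Lambda_mat m mu * M_mat A)
                                        *\<^sub>v (b - A *\<^sub>v y k)"
  shows "(\<forall>k\<ge>1. vnorm2 (y k - xdag - proj_null A (y 0))
              \<le> max_sv01 (Qmat A mu) * vnorm2 (y (k - 1) - xdag - proj_null A (y 0)))
       \<and> (\<forall>k\<ge>1. vnorm2 (y k - xdag - proj_null A (y 0))
              \<le> (max_sv01 (Qmat A mu)) ^ k * vnorm2 (y 0 - xdag - proj_null A (y 0)))"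
proof -
  have dA: "dim_row A = m" "dim_col A = n" using A by auto
  define Q where "Q = Qmat A mu"
  have Qc: "Q \<in> carrier_mat n n" unfolding Q_def Qmat_def using Qfrom_carrier[of A mu 0] dA by simp
  define Z where "Z = {z \<in> carrier_vec n. A *\<^sub>v z = 0\<^sub>v m}"
  have Zc: "Z \<subseteq> carrier_vec n" unfolding Z_def by auto
  define p where "p = proj_null A (y 0)"
  have p: "p \<in> carrier_vec n" "A *\<^sub>v p = 0\<^sub>v m" "\<And>z. z \<in> Z \<Longrightarrow> (y 0 - p) \<bullet> z = 0"
    using proj_null_props[OF A y0] unfolding p_def Z_def by auto
  define G where "G = transpose_mat A * transpose_mat C * Lambda_mat m mu * M_mat A"
  have Mc: "M_mat A \<in> carrier_mat m m" unfolding M_mat_def dA by simp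
  have Lc: "Lambda_mat m mu \<in> carrier_mat m m" unfolding Lambda_mat_def by simp
  have T1: "transpose_mat A * transpose_mat C \<in> carrier_mat n m" using A C(1) by simp
  have T2: "transpose_mat A * transpose_mat C * Lambda_mat m mu \<in> carrier_mat n m"
    by (rule mult_carrier_mat[OF T1 Lc])
  have Gc: "G \<in> carrier_mat n m" unfolding G_def by (rule mult_carrier_mat[OF T2 Mc])
  have xd: "xdag \<in> carrier_vec n" using xdag A unfolding min_norm_lsq_def lsq_solution_def by auto
  obtain x0 where x0: "x0 \<in> carrier_vec n" "A *\<^sub>v x0 = b" using consistent by blast
  have vn0: "vnorm2 (0\<^sub>v k) = 0" for k unfolding vnorm2_def by simp
  have Axd: "A *\<^sub>v xdag = b"
  proof -
    have "vnorm2 (A *\<^sub>v xdag - b) \<le> vnorm2 (A *\<^sub>v x0 - b)"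
      using xdag x0 A unfolding min_norm_lsq_def lsq_solution_def by auto
    also have "A *\<^sub>v x0 - b = 0\<^sub>v m" using x0 b by (auto simp: vec_eq_iff)
    finally have "vnorm2 (A *\<^sub>v xdag - b) \<le> 0" using vn0 by simp
    then have "(A *\<^sub>v xdag - b) \<bullet> (A *\<^sub>v xdag - b) = 0"
      unfolding vnorm2_def using self_sprod_nonneg[of "A *\<^sub>v xdag - b"] by simp
    then have "A *\<^sub>v xdag - b = 0\<^sub>v m" using self_sprod_zero[of _ m] A b xd by simp
    then show ?thesis using A b xd by (auto simp: vec_eq_iff)
  qed
  have xorth: "xdag \<bullet> z = 0" if z: "z \<in> Z" for z
  proof -
    have zc: "z \<in> carrier_vec n" "A *\<^sub>v z = 0\<^sub>v m" using z unfolding Z_def by auto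
    have "0 \<le> t * (2 * (xdag \<bullet> z)) + t^2 * (z \<bullet> z)" for t
    proof -
      have c: "xdag + t \<cdot>\<^sub>v z \<in> carrier_vec n" using xd zc by simp
      have "A *\<^sub>v (xdag + t \<cdot>\<^sub>v z) = b"
        using xd zc A b Axd by (simp add: mult_add_distrib_mat_vec[OF A] mult_mat_vec[OF A] vec_eq_iff)
      then have res: "A *\<^sub>v (xdag + t \<cdot>\<^sub>v z) - b = 0\<^sub>v m" using b by (auto simp: vec_eq_iff)
      have "lsq_solution A b (xdag + t \<cdot>\<^sub>v z)"
        unfolding lsq_solution_def dA res vn0 using c by (auto simp: vnorm2_def self_sprod_nonneg)
      then have "vnorm2 xdag \<le> vnorm2 (xdag + t \<cdot>\<^sub>v z)" using xdag unfolding min_norm_lsq_def by blast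
      then have "xdag \<bullet> xdag \<le> (xdag + t \<cdot>\<^sub>v z) \<bullet> (xdag + t \<cdot>\<^sub>v z)"
        unfolding vnorm2_def using self_sprod_nonneg[of xdag] by simp
      also have "\<dots> = xdag \<bullet> xdag + t * (xdag \<bullet> z) + t * (z \<bullet> xdag) + t^2 * (z \<bullet> z)"
        by (rule expand2[OF xd zc(1) xd zc(1)])
      finally show ?thesis using comm_scalar_prod[OF xd zc(1)] by (simp add: algebra_simps)
    qed
    then have "2 * (xdag \<bullet> z) = 0" by (intro quad_zero) auto
    then show ?thesis by simp
  qed
  have QZ: "Q *\<^sub>v z = z" if z: "z \<in> Z" for z
  proof -
    have zc: "z \<in> carrier_vec n" "A *\<^sub>v z = 0\<^sub>v m" using z unfolding Z_def by auto
    have rz: "row A i \<bullet> z = 0" if "i < m" for i using zc that A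
      by (metis index_mult_mat_vec index_zero_vec(1) carrier_matD(1))
    show ?thesis
    proof (rule eq_vecI)
      fix l assume "l < dim_vec z"
      then have l: "l < n" using zc by simp
      have "z $ l - (Q *\<^sub>v z) $ l = 0"
        unfolding Q_def using Q_identity[of z A l mu] zc l dA rz by simp
      then show "(Q *\<^sub>v z) $ l = z $ l" by simp
    qed (use Qc zc in simp)
  qed
  have GA: "z \<bullet> (G *\<^sub>v (A *\<^sub>v x)) = 0" if z: "z \<in> Z" and x: "x \<in> carrier_vec n" for z x
  proof -
    have zc: "z \<in> carrier_vec n" "A *\<^sub>v z = 0\<^sub>v m" using z unfolding Z_def by auto
    define w where "w = M_mat A *\<^sub>v (A *\<^sub>v x)"
    define w' where "w' = transpose_mat C *\<^sub>v (Lambda_mat m mu *\<^sub>v w)"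
    have w: "w \<in> carrier_vec m" unfolding w_def using Mc A x by simp
    have w': "w' \<in> carrier_vec m" unfolding w'_def using Lc C(1) w by simp
    have "G *\<^sub>v (A *\<^sub>v x) = (transpose_mat A * transpose_mat C * Lambda_mat m mu) *\<^sub>v w"
      unfolding G_def w_def using A C(1) Mc Lc x by (intro assoc_mult_mat_vec) auto
    also have "\<dots> = (transpose_mat A * transpose_mat C) *\<^sub>v (Lambda_mat m mu *\<^sub>v w)"
      using A C(1) Lc w by (intro assoc_mult_mat_vec) auto
    also have "\<dots> = transpose_mat A *\<^sub>v w'"
      unfolding w'_def using A C(1) Lc w by (intro assoc_mult_mat_vec) auto
    finally have "z \<bullet> (G *\<^sub>v (A *\<^sub>v x)) = (transpose_mat A *\<^sub>v w') \<bullet> z"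
      using comm_scalar_prod[OF zc(1), of "transpose_mat A *\<^sub>v w'"] A w' by simp
    also have "\<dots> = w' \<bullet> (A *\<^sub>v z)" by (rule transpose_vec_mult_scalar[OF A zc(1) w'])
    also have "\<dots> = 0" using zc w' by simp
    finally show ?thesis .
  qed
  have QTZ: "transpose_mat Q *\<^sub>v z = z" if z: "z \<in> Z" for z
  proof -
    have zc: "z \<in> carrier_vec n" using z unfolding Z_def by auto
    define d where "d = transpose_mat Q *\<^sub>v z - z"
    have d: "d \<in> carrier_vec n" unfolding d_def using Qc zc by simp
    have Qd: "Q *\<^sub>v d \<in> carrier_vec n" using Qc d by simp
    have "(transpose_mat Q *\<^sub>v z) \<bullet> d = z \<bullet> (Q *\<^sub>v d)" by (rule transpose_vec_mult_scalar[OF Qc d zc])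
    also have "Q *\<^sub>v d = d - G *\<^sub>v (A *\<^sub>v d)"
      using G_identity[OF A C(1) AS d] Qc d Gc A unfolding G_def[symmetric] Q_def[symmetric]
      by (auto simp: vec_eq_iff)
    also have "z \<bullet> (d - G *\<^sub>v (A *\<^sub>v d)) = z \<bullet> d - z \<bullet> (G *\<^sub>v (A *\<^sub>v d))"
      using zc d Gc A by (intro scalar_prod_minus_distrib[of _ n]) auto
    also have "z \<bullet> (G *\<^sub>v (A *\<^sub>v d)) = 0" by (rule GA[OF z d])
    finally have "(transpose_mat Q *\<^sub>v z) \<bullet> d - z \<bullet> d = 0" by simp
    then have "d \<bullet> d = 0" unfolding d_def[of] using minus_scalar_prod_distrib[of "transpose_mat Q *\<^sub>v z" n z d] Qc zc d
      by (simp add: d_def[symmetric])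
    then have "d = 0\<^sub>v n" by (rule self_sprod_zero[OF d])
    then show ?thesis unfolding d_def using Qc zc by (auto simp: vec_eq_iff)
  qed
  have contr: "(Q *\<^sub>v x) \<bullet> (Q *\<^sub>v x) \<le> x \<bullet> x" if x: "x \<in> carrier_vec n" for x
    using Qfrom_contr[of A mu x 0] nozero mu x dA unfolding Q_def Qmat_def by simp
  have eqZ: "x \<in> Z" if x: "x \<in> carrier_vec n" and eq: "(Q *\<^sub>v x) \<bullet> (Q *\<^sub>v x) = x \<bullet> x" for x
  proof -
    have "\<forall>i<m. row A i \<bullet> x = 0"
      using Qfrom_contr[of A mu x 0] nozero mu x dA eq unfolding Q_def Qmat_def by simp
    then have "\<forall>i<m. x \<bullet> row A i = 0" using comm_scalar_prod[OF x] A by (metis carrier_matD(2) row_carrier)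
    then show ?thesis unfolding Z_def using mat_vec_zero_iff[OF A x] x by simp
  qed
  have bound: "(Q *\<^sub>v v) \<bullet> (Q *\<^sub>v v) \<le> (max_sv01 Q)^2 * (v \<bullet> v)"
    if "v \<in> carrier_vec n" "\<forall>z\<in>Z. v \<bullet> z = 0" for v
    by (rule sv_bound[OF Qc Zc contr eqZ QZ QTZ that])
  have s0: "max_sv01 Q \<ge> 0" by (rule max_sv01_ge(1)[OF Qc])
  define e where "e k = y k - xdag - p" for k
  have yc: "y k \<in> carrier_vec n" for k
  proof (induction k)
    case 0 then show ?case using y0 .
  next
    case (Suc k) then show ?case using ystep Gc A b unfolding G_def[symmetric] by simp
  qed
  have ec: "e k \<in> carrier_vec n" for k unfolding e_def using yc xd p by simp
  have estep: "e (Suc k) = Q *\<^sub>v e k" for k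
  proof -
    define w where "w = xdag + p - y k"
    have w: "w \<in> carrier_vec n" unfolding w_def using xd p yc[of k] by simp
    have Aw: "A *\<^sub>v w = b - A *\<^sub>v y k"
      unfolding w_def using A xd p yc[of k] Axd b
      by (simp add: mult_add_distrib_mat_vec[OF A] mult_minus_distrib_mat_vec[OF A] vec_eq_iff)
    have ys: "y (Suc k) = y k + (w - Q *\<^sub>v w)"
      using ystep G_identity[OF A C(1) AS w] unfolding Aw G_def[symmetric] Q_def[symmetric] by simp
    have "e k = (-1) \<cdot>\<^sub>v w" unfolding e_def w_def using xd p yc[of k] by (auto simp: vec_eq_iff)
    then have QE: "Q *\<^sub>v e k = (-1) \<cdot>\<^sub>v (Q *\<^sub>v w)" using mult_mat_vec[OF Qc w] by simp
    have Qw: "Q *\<^sub>v w \<in> carrier_vec n" using Qc w by simp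
    show ?thesis unfolding QE
    proof (rule eq_vecI)
      show "dim_vec (e (Suc k)) = dim_vec ((-1) \<cdot>\<^sub>v (Q *\<^sub>v w))" using ec[of "Suc k"] Qw Qc by simp
      fix i assume "i < dim_vec ((-1) \<cdot>\<^sub>v (Q *\<^sub>v w))"
      then have i: "i < n" using Qw Qc by simp
      have "e (Suc k) $ i = y k $ i + (w $ i - (Q *\<^sub>v w) $ i) - xdag $ i - p $ i"
        unfolding e_def ys using i carrier_vecD[OF yc[of k]] carrier_vecD[OF w] carrier_vecD[OF Qw]
          carrier_vecD[OF xd] carrier_vecD[OF p(1)] by simp
      also have "w $ i = xdag $ i + p $ i - y k $ i" unfolding w_def using i yc[of k] xd p by simp
      finally show "e (Suc k) $ i = ((-1) \<cdot>\<^sub>v (Q *\<^sub>v w)) $ i" using i carrier_vecD[OF Qw] by simp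
    qed
  qed
  have eorth: "\<forall>z\<in>Z. e k \<bullet> z = 0" for k
  proof (induction k)
    case 0
    show ?case
    proof
      fix z assume z: "z \<in> Z"
      have zc: "z \<in> carrier_vec n" using z unfolding Z_def by auto
      have "e 0 = (y 0 - p) - xdag" unfolding e_def using y0 xd p by (auto simp: vec_eq_iff)
      then have "e 0 \<bullet> z = (y 0 - p) \<bullet> z - xdag \<bullet> z"
        using minus_scalar_prod_distrib[of "y 0 - p" n xdag z] y0 p xd zc by simp
      then show "e 0 \<bullet> z = 0" using p(3)[OF z] xorth[OF z] by simp
    qed
  next
    case (Suc k)
    show ?case
    proof
      fix z assume z: "z \<in> Z"
      have zc: "z \<in> carrier_vec n" using z unfolding Z_def by auto
      have "e (Suc k) \<bullet> z = z \<bullet> (Q *\<^sub>v e k)"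
        unfolding estep using comm_scalar_prod[of "Q *\<^sub>v e k" n z] Qc ec zc by simp
      also have "\<dots> = (transpose_mat Q *\<^sub>v z) \<bullet> e k" by (rule transpose_vec_mult_scalar[OF Qc ec zc, symmetric])
      also have "\<dots> = 0" using QTZ[OF z] Suc z comm_scalar_prod[OF zc ec] by simp
      finally show "e (Suc k) \<bullet> z = 0" .
    qed
  qed
  have one: "vnorm2 (e (Suc k)) \<le> max_sv01 Q * vnorm2 (e k)" for k
  proof -
    have "vnorm2 (e (Suc k)) = sqrt ((Q *\<^sub>v e k) \<bullet> (Q *\<^sub>v e k))" unfolding vnorm2_def estep ..
    also have "\<dots> \<le> sqrt ((max_sv01 Q)^2 * (e k \<bullet> e k))"
      using bound[OF ec eorth] by (rule real_sqrt_le_mono)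
    also have "\<dots> = max_sv01 Q * vnorm2 (e k)" unfolding vnorm2_def using s0 by (simp add: real_sqrt_mult)
    finally show ?thesis .
  qed
  have many: "vnorm2 (e k) \<le> (max_sv01 Q)^k * vnorm2 (e 0)" for k
  proof (induction k)
    case 0 then show ?case by simp
  next
    case (Suc k)
    have "vnorm2 (e (Suc k)) \<le> max_sv01 Q * vnorm2 (e k)" by (rule one)
    also have "\<dots> \<le> max_sv01 Q * ((max_sv01 Q)^k * vnorm2 (e 0))" using Suc s0 by (rule mult_left_mono)
    finally show ?case by simp
  qed
  show ?thesis
  proof (intro conjI allI impI)
    fix k :: nat assume "k \<ge> 1"
    then obtain j where k: "k = Suc j" by (cases k) auto
    show "vnorm2 (y k - xdag - proj_null A (y 0))
              \<le> max_sv01 (Qmat A mu) * vnorm2 (y (k - 1) - xdag - proj_null A (y 0))"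
      using one[of j] unfolding k e_def p_def Q_def by simp
  next
    fix k :: nat assume "k \<ge> 1"
    show "vnorm2 (y k - xdag - proj_null A (y 0))
              \<le> (max_sv01 (Qmat A mu)) ^ k * vnorm2 (y 0 - xdag - proj_null A (y 0))"
      using many[of k] unfolding e_def p_def Q_def by simp
  qed
qed


end
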